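(* Let $T$ be any fixed full binary tree with leaves identified with $[n]$, and leaf probabilities $q_1,\dots,q_n\in[0,1]$ with $\sum_iq_i=k\in\mathbb Z$. Let $\mu$ be the distribution of the indicator vector $\boldsymbol\xi\in\{0,1\}^n$ of the output of binary-tree pivotal sampling on $T$. Then $\mu$ is $k$-homogeneous, and for every $\mathcal S\subseteq[n]$ with $\Pr[\xi_\ell=1\ \forall\ell\in\mathcal S]>0$ and every $i\in[n]\setminus\mathcal S$ with positive conditioning probability, $$\sum_{j\in[n]}|\mathcal I^{\mathcal S}_\mu(i,j)|=2-2\Pr[\xi_i=1\mid\xi_\ell=1\ \forall\ell\in\mathcal S]\le 2 .$$ In particular $\mu$ is one-sided $\ell_\infty$-independent with parameter $2$.
   Context: Binary-tree pivotal sampling: let $T$ be a full binary tree whose leaves are identified with an index set, and let $q_i\in[0,1]$ be leaf probabilities with integer sum. Each node can store an index together with a current probability; initially each leaf $i$ stores $i$ with probability $q_i$, and the output set $\mathcal S_{\rm out}$ is empty. Repeatedly choose two sibling nodes that both store indices, say $i$ with probability $q_i$ and $j$ with probability $q_j$, with parent $P$, and remove them. If $q_i+q_j\le1$: with probability $q_i/(q_i+q_j)$ store $i$ at $P$ with probability $q_i+q_j$ ($j$ is rejected), otherwise store $j$ at $P$ with probability $q_i+q_j$ ($i$ is rejected). If $q_i+q_j>1$: with probability $(1-q_i)/(2-q_i-q_j)$ put $j$ into $\mathcal S_{\rm out}$ and store $i$ at $P$ with probability $q_i+q_j-1$; otherwise put $i$ into $\mathcal S_{\rm out}$ and store $j$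 at $P$ with probability $q_i+q_j-1$. When only the root stores an index, put it into $\mathcal S_{\rm out}$ iff its probability is $1$. One-sided influence: $\mathcal I^{\mathcal S}_\mu(i,j)=\Pr[\xi_j=1\mid \xi_i=1,\ \xi_\ell=1\ \forall\ell\in\mathcal S]-\Pr[\xi_j=1\mid \xi_\ell=1\ \forall\ell\in\mathcal S]$ (taken to be $0$ for $j\in\mathcal S$); one-sided $\ell_\infty$-independence with parameter $D$ means $\max_i\sum_j|\mathcal I^{\mathcal S}_\mu(i,j)|\le D$ for all $\mathcal S$. $k$-homogeneous: every realization has exactly $k$ ones. *)

theory Defs
  imports "HOL-Probability.Probability_Mass_Function"
begin

datatype btree = Leaf nat | Node btree btree

fun leaves :: "btree \<Rightarrow> nat list" where
  "leaves (Leaf i) = [i]"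
| "leaves (Node l r) = leaves l @ leaves r"

text \<open>One pivotal merge step of two siblings storing (i, a) and (j, b).
  Input S is the current output set; result: new output set and the
  (index, probability) stored at the parent.\<close>
definition pivot_merge ::
  "nat set \<Rightarrow> nat \<Rightarrow> real \<Rightarrow> nat \<Rightarrow> real \<Rightarrow> (nat set \<times> nat \<times> real) pmf" where
  "pivot_merge S i a j b =
     (if a + b \<le> 1 then
        map_pmf (\<lambda>c. (S, if c then i else j, a + b)) (bernoulli_pmf (a / (a + b)))
      else
        map_pmf (\<lambda>c. (if c then insert j S else insert i S, if c then i else j, a + b - 1))
          (bernoulli_pmf ((1 - a) / (2 - a - b))))"

fun pivot_subtree :: "(nat \<Rightarrow> real) \<Rightarrow> btree \<Rightarrow> (nat set \<times> nat \<times> real) pmf" where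
  "pivot_subtree q (Leaf i) = return_pmf ({}, i, q i)"
| "pivot_subtree q (Node l r) =
     bind_pmf (pivot_subtree q l) (\<lambda>(S1, i, a).
     bind_pmf (pivot_subtree q r) (\<lambda>(S2, j, b).
       pivot_merge (S1 \<union> S2) i a j b))"

definition pivotal_sampling :: "(nat \<Rightarrow> real) \<Rightarrow> btree \<Rightarrow> nat set pmf" where
  "pivotal_sampling q T =
     map_pmf (\<lambda>(S, i, p). if p = 1 then insert i S else S) (pivot_subtree q T)"

text \<open>Distributions on subsets (= indicator vectors xi, xi_i = 1 iff i in the set).\<close>
definition prob_all :: "nat set pmf \<Rightarrow> nat set \<Rightarrow> real" where
  "prob_all \<mu> A = measure_pmf.prob \<mu> {X. A \<subseteq> X}"

definition cond_prob :: "nat set pmf \<Rightarrow> nat \<Rightarrow> nat set \<Rightarrow> real" where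
  "cond_prob \<mu> j A = prob_all \<mu> (insert j A) / prob_all \<mu> A"

definition influence :: "nat set pmf \<Rightarrow> nat set \<Rightarrow> nat \<Rightarrow> nat \<Rightarrow> real" where
  "influence \<mu> S i j =
     (if j \<in> S then 0 else cond_prob \<mu> j (insert i S) - cond_prob \<mu> j S)"

definition homogeneous :: "nat \<Rightarrow> nat set pmf \<Rightarrow> bool" where
  "homogeneous k \<mu> \<longleftrightarrow> (\<forall>X \<in> set_pmf \<mu>. card X = k)"

definition one_sided_linf_indep :: "nat set pmf \<Rightarrow> nat set \<Rightarrow> real \<Rightarrow> bool" where
  "one_sided_linf_indep \<mu> N D \<longleftrightarrow>
     (\<forall>S \<subseteq> N. prob_all \<mu> S > 0 \<longrightarrow>
        (\<forall>i \<in> N. prob_all \<mu> (insert i S) > 0 \<longrightarrow>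
           (\<Sum>j\<in>N. \<bar>influence \<mu> S i j\<bar>) \<le> D))"

end

theory Submission imports Defs begin

definition RayC :: "((nat \<Rightarrow> real) \<Rightarrow> real) \<Rightarrow> bool" where
 "RayC g \<longleftrightarrow> (\<forall>x u v. u \<noteq> v \<longrightarrow>
    g (x(u:=0,v:=0)) * g (x(u:=1,v:=1)) \<le> g (x(u:=1,v:=0)) * g (x(u:=0,v:=1)))"

definition local_on :: "nat set \<Rightarrow> ((nat \<Rightarrow> real) \<Rightarrow> real) \<Rightarrow> bool" where
 "local_on L g \<longleftrightarrow> (\<forall>x y. (\<forall>k\<in>L. x k = y k) \<longrightarrow> g x = g y)"

definition InvKH :: "((nat \<Rightarrow> real) \<Rightarrow> real) \<Rightarrow> ((nat \<Rightarrow> real) \<Rightarrow> real) \<Rightarrow> bool" where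
 "InvKH K H \<longleftrightarrow> (\<forall>c d. RayC (\<lambda>x. c * K x + d * H x)) \<and>
    (\<forall>x u. K (x(u:=0)) * H (x(u:=1)) \<le> H (x(u:=0)) * K (x(u:=1)))"

definition bil :: "real \<Rightarrow> real \<Rightarrow> real \<Rightarrow> real \<Rightarrow> real \<Rightarrow> real \<Rightarrow> real \<Rightarrow> real \<Rightarrow> real" where
 "bil c11 c12 c21 c22 k h m n = c11*k*m + c12*k*n + c21*h*m + c22*h*n"

lemma localD: "local_on L g \<Longrightarrow> (\<And>k. k\<in>L \<Longrightarrow> x k = y k) \<Longrightarrow> g x = g y"
  unfolding local_on_def by blast

lemma core:
  fixes g11 g12 g21 g22 k0 h0 k1 h1 m0 n0 m1 n1 :: real
  assumes "g11*g22 - g12*g21 \<le> 0" "k0*h1 \<le> h0*k1" "m0*n1 \<le> n0*m1"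
  shows "bil g11 g12 g21 g22 k0 h0 m0 n0 * bil g11 g12 g21 g22 k1 h1 m1 n1
     \<le> bil g11 g12 g21 g22 k1 h1 m0 n0 * bil g11 g12 g21 g22 k0 h0 m1 n1"
proof -
  have id: "bil g11 g12 g21 g22 k1 h1 m0 n0 * bil g11 g12 g21 g22 k0 h0 m1 n1
     - bil g11 g12 g21 g22 k0 h0 m0 n0 * bil g11 g12 g21 g22 k1 h1 m1 n1
     = (-(g11*g22 - g12*g21)) * ((k0*h1 - h0*k1) * (m0*n1 - n0*m1))"
    unfolding bil_def by (simp add: algebra_simps)
  have "0 \<le> (-(g11*g22 - g12*g21)) * ((k0*h1 - h0*k1) * (m0*n1 - n0*m1))"
    using assms by (intro mult_nonneg_nonneg mult_nonpos_nonpos) auto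
  with id show ?thesis by linarith
qed

lemma core2:
  fixes a11 a12 a21 a22 k0 h0 k1 h1 :: real
  assumes "0 \<le> a11*a22 - a12*a21" "k0*h1 \<le> h0*k1"
  shows "(a11*k0 + a12*h0) * (a21*k1 + a22*h1) \<le> (a21*k0 + a22*h0) * (a11*k1 + a12*h1)"
proof -
  have id: "(a11*k0 + a12*h0) * (a21*k1 + a22*h1) - (a21*k0 + a22*h0) * (a11*k1 + a12*h1)
      = (a11*a22 - a12*a21) * (k0*h1 - h0*k1)"
    by (simp add: algebra_simps)
  have "(a11*a22 - a12*a21) * (k0*h1 - h0*k1) \<le> 0"
    using assms by (simp add: mult_nonneg_nonpos)
  with id show ?thesis by linarith
qed

lemma local_upd: "local_on L g \<Longrightarrow> u \<notin> L \<Longrightarrow> g (x(u:=t)) = g x"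
  by (rule localD) auto

lemma merge_inv:
  fixes K1 H1 K2 H2 :: "(nat \<Rightarrow> real) \<Rightarrow> real"
  assumes l1: "local_on L1 K1" "local_on L1 H1" and l2: "local_on L2 K2" "local_on L2 H2"
    and disj: "L1 \<inter> L2 = {}"
    and I1: "InvKH K1 H1" and I2: "InvKH K2 H2"
    and hdet: "\<And>c d. (c*e11+d*f11)*(c*e22+d*f22) - (c*e12+d*f12)*(c*e21+d*f21) \<le> 0"
    and hA: "\<And>m n. 0 \<le> (e11*m+e12*n)*(f21*m+f22*n) - (e21*m+e22*n)*(f11*m+f12*n)"
    and hB: "\<And>k h. 0 \<le> (e11*k+e21*h)*(f12*k+f22*h) - (e12*k+e22*h)*(f11*k+f21*h)"
  shows "InvKH (\<lambda>x. bil e11 e12 e21 e22 (K1 x) (H1 x) (K2 x) (H2 x))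
               (\<lambda>x. bil f11 f12 f21 f22 (K1 x) (H1 x) (K2 x) (H2 x))"
proof -
  define K where "K = (\<lambda>x. bil e11 e12 e21 e22 (K1 x) (H1 x) (K2 x) (H2 x))"
  define H where "H = (\<lambda>x. bil f11 f12 f21 f22 (K1 x) (H1 x) (K2 x) (H2 x))"
  have I1a: "\<And>c d. RayC (\<lambda>x. c * K1 x + d * H1 x)" and
       I1b: "\<And>x u. K1 (x(u:=0)) * H1 (x(u:=1)) \<le> H1 (x(u:=0)) * K1 (x(u:=1))"
    using I1 unfolding InvKH_def by auto
  have I2a: "\<And>c d. RayC (\<lambda>x. c * K2 x + d * H2 x)" and
       I2b: "\<And>x u. K2 (x(u:=0)) * H2 (x(u:=1)) \<le> H2 (x(u:=0)) * K2 (x(u:=1))"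
    using I2 unfolding InvKH_def by auto
  have partii: "K (x(u:=0)) * H (x(u:=1)) \<le> H (x(u:=0)) * K (x(u:=1))" for x u
  proof (cases "u \<in> L1")
    case True
    then have u2: "u \<notin> L2" using disj by auto
    define m where "m = K2 x"
    define n where "n = H2 x"
    have [simp]: "K2 (x(u:=t)) = m" "H2 (x(u:=t)) = n" for t
      using local_upd[OF l2(1) u2] local_upd[OF l2(2) u2] m_def n_def by auto
    have eK: "K (x(u:=t)) = (e11*m+e12*n) * K1 (x(u:=t)) + (e21*m+e22*n) * H1 (x(u:=t))" for t
      unfolding K_def bil_def by (simp add: algebra_simps)
    have eH: "H (x(u:=t)) = (f11*m+f12*n) * K1 (x(u:=t)) + (f21*m+f22*n) * H1 (x(u:=t))" for t
      unfolding H_def bil_def by (simp add: algebra_simps)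
    show ?thesis unfolding eK eH
      by (rule core2) (use hA[of m n] I1b[of x u] in auto)
  next
    case False
    show ?thesis
    proof (cases "u \<in> L2")
      case True
      then have u1: "u \<notin> L1" using disj by auto
      define m where "m = K1 x"
      define n where "n = H1 x"
      have [simp]: "K1 (x(u:=t)) = m" "H1 (x(u:=t)) = n" for t
        using local_upd[OF l1(1) u1] local_upd[OF l1(2) u1] m_def n_def by auto
      have eK: "K (x(u:=t)) = (e11*m+e21*n) * K2 (x(u:=t)) + (e12*m+e22*n) * H2 (x(u:=t))" for t
        unfolding K_def bil_def by (simp add: algebra_simps)
      have eH: "H (x(u:=t)) = (f11*m+f21*n) * K2 (x(u:=t)) + (f12*m+f22*n) * H2 (x(u:=t))" for t
        unfolding H_def bil_def by (simp add: algebra_simps)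
      show ?thesis unfolding eK eH
        by (rule core2) (use hB[of m n] I2b[of x u] in auto)
    next
      case False2: False
      have "K (x(u:=t)) = K x" "H (x(u:=t)) = H x" for t
        unfolding K_def H_def
        using local_upd[OF l1(1) False] local_upd[OF l1(2) False]
          local_upd[OF l2(1) False2] local_upd[OF l2(2) False2] by auto
      then show ?thesis by (simp add: mult.commute)
    qed
  qed
  have parti: "RayC (\<lambda>x. c * K x + d * H x)" for c d
  proof -
    define g11 where "g11 = c*e11+d*f11"
    define g12 where "g12 = c*e12+d*f12"
    define g21 where "g21 = c*e21+d*f21"
    define g22 where "g22 = c*e22+d*f22"
    define g where "g = (\<lambda>x. c * K x + d * H x)"
    have gb: "g x = bil g11 g12 g21 g22 (K1 x) (H1 x) (K2 x) (H2 x)" for x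
      unfolding g_def K_def H_def bil_def g11_def g12_def g21_def g22_def by (simp add: algebra_simps)
    have gdet: "g11*g22 - g12*g21 \<le> 0"
      using hdet[of c d] unfolding g11_def g12_def g21_def g22_def by simp
    have "g (x(u:=0,v:=0)) * g (x(u:=1,v:=1)) \<le> g (x(u:=1,v:=0)) * g (x(u:=0,v:=1))"
      if uv: "u \<noteq> v" for x u v
    proof -
      have same1: "\<And>a b c. u \<in> L1 \<Longrightarrow> v \<in> L1 \<Longrightarrow> g (x(u:=a,v:=b)) =
          (g11 * K2 x + g12 * H2 x) * K1 (x(u:=a,v:=b)) + (g21 * K2 x + g22 * H2 x) * H1 (x(u:=a,v:=b))"
      proof -
        fix a b assume "u \<in> L1" "v \<in> L1"
        then have "u \<notin> L2" "v \<notin> L2" using disj by auto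
        then have "K2 (x(u:=a,v:=b)) = K2 x" "H2 (x(u:=a,v:=b)) = H2 x"
          by (auto intro!: localD[OF l2(1)] localD[OF l2(2)])
        then show "g (x(u:=a,v:=b)) =
          (g11 * K2 x + g12 * H2 x) * K1 (x(u:=a,v:=b)) + (g21 * K2 x + g22 * H2 x) * H1 (x(u:=a,v:=b))"
          unfolding gb bil_def by (simp add: algebra_simps)
      qed
      have same2: "\<And>a b c. u \<in> L2 \<Longrightarrow> v \<in> L2 \<Longrightarrow> g (x(u:=a,v:=b)) =
          (g11 * K1 x + g21 * H1 x) * K2 (x(u:=a,v:=b)) + (g12 * K1 x + g22 * H1 x) * H2 (x(u:=a,v:=b))"
      proof -
        fix a b assume "u \<in> L2" "v \<in> L2"
        then have "u \<notin> L1" "v \<notin> L1" using disj by auto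
        then have "K1 (x(u:=a,v:=b)) = K1 x" "H1 (x(u:=a,v:=b)) = H1 x"
          by (auto intro!: localD[OF l1(1)] localD[OF l1(2)])
        then show "g (x(u:=a,v:=b)) =
          (g11 * K1 x + g21 * H1 x) * K2 (x(u:=a,v:=b)) + (g12 * K1 x + g22 * H1 x) * H2 (x(u:=a,v:=b))"
          unfolding gb bil_def by (simp add: algebra_simps)
      qed
      have locg: "local_on (L1 \<union> L2) g"
        unfolding local_on_def gb
        using l1 l2 unfolding local_on_def by (metis UnCI)
      consider "u \<in> L1" "v \<in> L1" | "u \<in> L2" "v \<in> L2" | "u \<in> L1" "v \<in> L2" | "u \<in> L2" "v \<in> L1"
        | "u \<notin> L1 \<union> L2" | "v \<notin> L1 \<union> L2" by blast
      then show ?thesis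
      proof cases
        case 1
        show ?thesis unfolding same1[OF 1] using I1a[of "g11 * K2 x + g12 * H2 x" "g21 * K2 x + g22 * H2 x"] uv
          unfolding RayC_def by blast
      next
        case 2
        show ?thesis unfolding same2[OF 2] using I2a[of "g11 * K1 x + g21 * H1 x" "g12 * K1 x + g22 * H1 x"] uv
          unfolding RayC_def by blast
      next
        case 3
        have a: "K1 (x(u:=a,v:=b)) = K1 (x(u:=a))" "H1 (x(u:=a,v:=b)) = H1 (x(u:=a))"
             "K2 (x(u:=a,v:=b)) = K2 (x(v:=b))" "H2 (x(u:=a,v:=b)) = H2 (x(v:=b))" for a b
          using 3 disj uv by (auto intro!: localD[OF l1(1)] localD[OF l1(2)] localD[OF l2(1)] localD[OF l2(2)])
        show ?thesis unfolding gb a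
          by (rule core[OF gdet I1b[of x u] I2b[of x v]])
      next
        case 4
        have a: "K1 (x(u:=a,v:=b)) = K1 (x(v:=b))" "H1 (x(u:=a,v:=b)) = H1 (x(v:=b))"
             "K2 (x(u:=a,v:=b)) = K2 (x(u:=a))" "H2 (x(u:=a,v:=b)) = H2 (x(u:=a))" for a b
          using 4 disj uv by (auto intro!: localD[OF l1(1)] localD[OF l1(2)] localD[OF l2(1)] localD[OF l2(2)])
        show ?thesis unfolding gb a
          using core[OF gdet I1b[of x v] I2b[of x u]] by (simp add: mult.commute)
      next
        case 5
        have "g (x(u:=a,v:=b)) = g (x(v:=b))" for a b
          using 5 uv by (intro localD[OF locg]) auto
        then show ?thesis by (simp add: mult.commute)
      next
        case 6
        have "g (x(u:=a,v:=b)) = g (x(u:=a))" for a b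
          using 6 uv by (intro localD[OF locg]) auto
        then show ?thesis by (simp add: mult.commute)
      qed
    qed
    then show ?thesis unfolding RayC_def g_def by blast
  qed
  show ?thesis unfolding InvKH_def using parti partii unfolding K_def H_def by blast
qed

lemma inv_caseA:
  fixes K1 H1 K2 H2 :: "(nat \<Rightarrow> real) \<Rightarrow> real"
  assumes "local_on L1 K1" "local_on L1 H1" "local_on L2 K2" "local_on L2 H2"
    "L1 \<inter> L2 = {}" "InvKH K1 H1" "InvKH K2 H2" "0 \<le> \<alpha>" "\<alpha> \<le> 1"
  shows "InvKH (\<lambda>x. bil 1 0 0 0 (K1 x) (H1 x) (K2 x) (H2 x))
               (\<lambda>x. bil 0 (1-\<alpha>) \<alpha> 0 (K1 x) (H1 x) (K2 x) (H2 x))"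
proof (rule merge_inv[OF assms(1-7)])
  fix c d :: real
  have "0 \<le> d*d*(\<alpha>*(1-\<alpha>))" using assms(8,9) by simp
  then show "(c * 1 + d * 0) * (c * 0 + d * 0) - (c * 0 + d * (1 - \<alpha>)) * (c * 0 + d * \<alpha>) \<le> 0"
    by (simp add: algebra_simps)
next
  fix m n :: real
  show "0 \<le> (1 * m + 0 * n) * (\<alpha> * m + 0 * n) - (0 * m + 0 * n) * (0 * m + (1 - \<alpha>) * n)"
    using mult_nonneg_nonneg[OF assms(8) zero_le_square[of m]] by (simp add: algebra_simps)
next
  fix k h :: real
  have "0 \<le> 1 - \<alpha>" using assms(9) by simp
  show "0 \<le> (1 * k + 0 * h) * ((1 - \<alpha>) * k + 0 * h) - (0 * k + 0 * h) * (0 * k + \<alpha> * h)"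
    using mult_nonneg_nonneg[OF \<open>0 \<le> 1 - \<alpha>\<close> zero_le_square[of k]] by (simp add: algebra_simps)
qed

lemma inv_caseB:
  fixes K1 H1 K2 H2 :: "(nat \<Rightarrow> real) \<Rightarrow> real"
  assumes "local_on L1 K1" "local_on L1 H1" "local_on L2 K2" "local_on L2 H2"
    "L1 \<inter> L2 = {}" "InvKH K1 H1" "InvKH K2 H2" "0 \<le> p" "p \<le> 1"
  shows "InvKH (\<lambda>x. bil 0 p (1-p) 0 (K1 x) (H1 x) (K2 x) (H2 x))
               (\<lambda>x. bil 0 0 0 1 (K1 x) (H1 x) (K2 x) (H2 x))"
proof (rule merge_inv[OF assms(1-7)])
  fix c d :: real
  have "0 \<le> c*c*(p*(1-p))" using assms(8,9) by simp
  then show "(c * 0 + d * 0) * (c * 0 + d * 1) - (c * p + d * 0) * (c * (1 - p) + d * 0) \<le> 0"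
    by (simp add: algebra_simps)
next
  fix m n :: real
  show "0 \<le> (0 * m + p * n) * (0 * m + 1 * n) - ((1 - p) * m + 0 * n) * (0 * m + 0 * n)"
    using mult_nonneg_nonneg[OF assms(8) zero_le_square[of n]] by (simp add: algebra_simps)
next
  fix k h :: real
  have "0 \<le> 1 - p" using assms(9) by simp
  show "0 \<le> (0 * k + (1 - p) * h) * (0 * k + 1 * h) - (p * k + 0 * h) * (0 * k + 0 * h)"
    using mult_nonneg_nonneg[OF \<open>0 \<le> 1 - p\<close> zero_le_square[of h]] by (simp add: algebra_simps)
qed

lemma inv_leaf: "InvKH (\<lambda>x. x i) (\<lambda>x. 1)"
  unfolding InvKH_def RayC_def by auto

lemma exp_cong:
  "(\<And>y. y \<in> set_pmf p \<Longrightarrow> f y = g y) \<Longrightarrow>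
    measure_pmf.expectation p f = measure_pmf.expectation p (g :: _ \<Rightarrow> real)"
  by (intro integral_cong_AE) (auto simp: AE_measure_pmf_iff)

lemma exp_fin: "finite (set_pmf p) \<Longrightarrow>
   measure_pmf.expectation p (f :: _ \<Rightarrow> real) = (\<Sum>y\<in>set_pmf p. f y * pmf p y)"
  by (rule integral_measure_pmf_real) (auto simp: set_pmf_iff)

lemma exp_bind:
  fixes g :: "_ \<Rightarrow> real"
  assumes fp: "finite (set_pmf p)" and ff: "\<And>x. x \<in> set_pmf p \<Longrightarrow> finite (set_pmf (f x))"
  shows "measure_pmf.expectation (bind_pmf p f) g
       = measure_pmf.expectation p (\<lambda>x. measure_pmf.expectation (f x) g)"
proof -
  define B where "B = (\<Union>x\<in>set_pmf p. set_pmf (f x))"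
  have fB: "finite B" unfolding B_def using fp ff by auto
  have pb: "pmf (bind_pmf p f) y = (\<Sum>x\<in>set_pmf p. pmf (f x) y * pmf p x)" for y
    unfolding pmf_bind by (rule exp_fin[OF fp])
  have "measure_pmf.expectation (bind_pmf p f) g = (\<Sum>y\<in>B. g y * pmf (bind_pmf p f) y)"
    by (rule integral_measure_pmf_real) (use fB in \<open>auto simp: B_def set_pmf_iff\<close>)
  also have "\<dots> = (\<Sum>y\<in>B. \<Sum>x\<in>set_pmf p. g y * pmf (f x) y * pmf p x)"
    unfolding pb by (simp add: sum_distrib_left mult.assoc)
  also have "\<dots> = (\<Sum>x\<in>set_pmf p. \<Sum>y\<in>B. g y * pmf (f x) y * pmf p x)"
    by (rule sum.swap)
  also have "\<dots> = (\<Sum>x\<in>set_pmf p. measure_pmf.expectation (f x) g * pmf p x)"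
  proof (rule sum.cong[OF refl])
    fix x assume x: "x \<in> set_pmf p"
    have "measure_pmf.expectation (f x) g = (\<Sum>y\<in>B. g y * pmf (f x) y)"
      by (rule integral_measure_pmf_real) (use fB x in \<open>auto simp: B_def set_pmf_iff\<close>)
    then show "(\<Sum>y\<in>B. g y * pmf (f x) y * pmf p x) = measure_pmf.expectation (f x) g * pmf p x"
      by (simp add: sum_distrib_right)
  qed
  also have "\<dots> = measure_pmf.expectation p (\<lambda>x. measure_pmf.expectation (f x) g)"
    by (rule exp_fin[OF fp, symmetric])
  finally show ?thesis .
qed

lemma exp_bil:
  fixes A B C D :: "_ \<Rightarrow> real"
  assumes "finite (set_pmf P1)" "finite (set_pmf P2)"
  shows "measure_pmf.expectation P1 (\<lambda>y. measure_pmf.expectation P2 (\<lambda>z.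
            bil e11 e12 e21 e22 (A y) (B y) (C z) (D z)))
       = bil e11 e12 e21 e22 (measure_pmf.expectation P1 A) (measure_pmf.expectation P1 B)
            (measure_pmf.expectation P2 C) (measure_pmf.expectation P2 D)"
proof -
  have i1: "integrable (measure_pmf P1) f" for f :: "_ \<Rightarrow> real"
    by (rule integrable_measure_pmf_finite[OF assms(1)])
  have i2: "integrable (measure_pmf P2) f" for f :: "_ \<Rightarrow> real"
    by (rule integrable_measure_pmf_finite[OF assms(2)])
  have "measure_pmf.expectation P2 (\<lambda>z. bil e11 e12 e21 e22 (A y) (B y) (C z) (D z))
      = e11 * A y * measure_pmf.expectation P2 C + e12 * A y * measure_pmf.expectation P2 D
        + e21 * B y * measure_pmf.expectation P2 C + e22 * B y * measure_pmf.expectation P2 D" for y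
    unfolding bil_def
    by (simp add: i2 integral_add integral_mult_right_zero mult.assoc)
  then show ?thesis
    unfolding bil_def
    by (simp add: i1 integral_add integral_mult_left_zero mult.assoc mult.left_commute[of _ "measure_pmf.expectation P2 _"])
qed

fun pv :: "(nat \<Rightarrow> real) \<Rightarrow> btree \<Rightarrow> real" where
  "pv q (Leaf i) = q i"
| "pv q (Node l r) = (if pv q l + pv q r \<le> 1 then pv q l + pv q r else pv q l + pv q r - 1)"

lemma set_merge: "y \<in> set_pmf (pivot_merge S i a j b) \<Longrightarrow>
  (a + b \<le> 1 \<and> (y = (S,i,a+b) \<or> y = (S,j,a+b))) \<or>
  (\<not> a + b \<le> 1 \<and> (y = (insert j S, i, a+b-1) \<or> y = (insert i S, j, a+b-1)))"
  by (auto simp: pivot_merge_def split: if_splits)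

lemma finite_merge: "finite (set_pmf (pivot_merge S i a j b))"
  by (rule finite_subset[of _ "{(S,i,a+b),(S,j,a+b),(insert j S, i, a+b-1),(insert i S, j, a+b-1)}"])
     (use set_merge in blast)+

lemma finite_bind: "finite (set_pmf p) \<Longrightarrow> (\<And>x. x \<in> set_pmf p \<Longrightarrow> finite (set_pmf (f x))) \<Longrightarrow>
   finite (set_pmf (bind_pmf p f))"
  by (simp add: set_bind_pmf)

lemma set_node: "y \<in> set_pmf (pivot_subtree q (Node l r)) \<Longrightarrow> \<exists>S1 i a S2 j b.
   (S1,i,a) \<in> set_pmf (pivot_subtree q l) \<and> (S2,j,b) \<in> set_pmf (pivot_subtree q r) \<and>
   y \<in> set_pmf (pivot_merge (S1\<union>S2) i a j b)"
  by (force simp: set_bind_pmf split: prod.splits)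

lemma supp_inv:
  assumes "distinct (leaves t)" "\<forall>k\<in>set (leaves t). 0 \<le> q k \<and> q k \<le> 1"
  shows "finite (set_pmf (pivot_subtree q t)) \<and> 0 \<le> pv q t \<and> pv q t \<le> 1 \<and>
    (\<forall>S i a. (S,i,a) \<in> set_pmf (pivot_subtree q t) \<longrightarrow> S \<subseteq> set (leaves t) \<and>
       i \<in> set (leaves t) \<and> i \<notin> S \<and> a = pv q t \<and>
       real (card S) + a = (\<Sum>k\<in>set (leaves t). q k))"
  using assms
proof (induction t)
  case (Leaf i)
  then show ?case by simp
next
  case (Node l r)
  define L1 where "L1 = set (leaves l)"
  define L2 where "L2 = set (leaves r)"
  have d: "distinct (leaves l)" "distinct (leaves r)" "L1 \<inter> L2 = {}"
    using Node.prems(1) by (auto simp: L1_def L2_def)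
  have qq: "\<forall>k\<in>set (leaves l). 0 \<le> q k \<and> q k \<le> 1" "\<forall>k\<in>set (leaves r). 0 \<le> q k \<and> q k \<le> 1"
    using Node.prems(2) by auto
  note IHl = Node.IH(1)[OF d(1) qq(1), folded L1_def]
  note IHr = Node.IH(2)[OF d(2) qq(2), folded L2_def]
  have fL: "finite L1" "finite L2" by (auto simp: L1_def L2_def)
  have sumL: "(\<Sum>k\<in>set (leaves (Node l r)). q k) = (\<Sum>k\<in>L1. q k) + (\<Sum>k\<in>L2. q k)"
    using d(3) fL by (simp add: L1_def[symmetric] L2_def[symmetric] sum.union_disjoint)
  have fin: "finite (set_pmf (pivot_subtree q (Node l r)))"
    unfolding pivot_subtree.simps
    using IHl IHr
    by (auto intro!: finite_bind finite_merge split: prod.splits)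
  have pvb: "0 \<le> pv q (Node l r) \<and> pv q (Node l r) \<le> 1" using IHl IHr by auto
  have el: "S \<subseteq> set (leaves (Node l r)) \<and> i \<in> set (leaves (Node l r)) \<and> i \<notin> S \<and>
       a = pv q (Node l r) \<and> real (card S) + a = (\<Sum>k\<in>set (leaves (Node l r)). q k)"
    if y: "(S,i,a) \<in> set_pmf (pivot_subtree q (Node l r))" for S i a
  proof -
    obtain S1 i1 a1 S2 j b where m1: "(S1,i1,a1) \<in> set_pmf (pivot_subtree q l)"
      and m2: "(S2,j,b) \<in> set_pmf (pivot_subtree q r)"
      and m: "(S,i,a) \<in> set_pmf (pivot_merge (S1\<union>S2) i1 a1 j b)"
      using set_node[OF y] by blast
    have h1: "S1 \<subseteq> L1" "i1 \<in> L1" "i1 \<notin> S1" "a1 = pv q l" "real (card S1) + a1 = (\<Sum>k\<in>L1. q k)"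
      using IHl m1 by auto
    have h2: "S2 \<subseteq> L2" "j \<in> L2" "j \<notin> S2" "b = pv q r" "real (card S2) + b = (\<Sum>k\<in>L2. q k)"
      using IHr m2 by auto
    have LN: "set (leaves (Node l r)) = L1 \<union> L2" by (simp add: L1_def L2_def)
    have fS: "finite S1" "finite S2" using h1 h2 fL finite_subset by auto
    have cu: "card (S1 \<union> S2) = card S1 + card S2"
      using h1 h2 d(3) fS by (intro card_Un_disjoint) auto
    have i1n: "i1 \<notin> S2" "j \<notin> S1" "i1 \<noteq> j" using h1 h2 d(3) by auto
    from set_merge[OF m] show ?thesis
    proof (elim disjE conjE)
      assume "a1 + b \<le> 1" "(S,i,a) = (S1 \<union> S2, i1, a1 + b)"
      then show ?thesis using h1 h2 i1n cu LN sumL by auto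
    next
      assume "a1 + b \<le> 1" "(S,i,a) = (S1 \<union> S2, j, a1 + b)"
      then show ?thesis using h1 h2 i1n cu LN sumL by auto
    next
      assume "\<not> a1 + b \<le> 1" "(S,i,a) = (insert j (S1 \<union> S2), i1, a1 + b - 1)"
      moreover have "card (insert j (S1 \<union> S2)) = card S1 + card S2 + 1"
        using cu i1n h2 fS by simp
      ultimately show ?thesis using h1 h2 i1n LN sumL by auto
    next
      assume "\<not> a1 + b \<le> 1" "(S,i,a) = (insert i1 (S1 \<union> S2), j, a1 + b - 1)"
      moreover have "card (insert i1 (S1 \<union> S2)) = card S1 + card S2 + 1"
        using cu i1n h1 fS by simp
      ultimately show ?thesis using h1 h2 i1n LN sumL by auto
    qed
  qed
  show ?case using fin pvb el by blast
qed

definition KK :: "(nat \<Rightarrow> real) \<Rightarrow> btree \<Rightarrow> (nat \<Rightarrow> real) \<Rightarrow> real" where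
  "KK q t x = measure_pmf.expectation (pivot_subtree q t)
      (\<lambda>(S,i,a). \<Prod>k\<in>set (leaves t) - S. x k)"

definition HH :: "(nat \<Rightarrow> real) \<Rightarrow> btree \<Rightarrow> (nat \<Rightarrow> real) \<Rightarrow> real" where
  "HH q t x = measure_pmf.expectation (pivot_subtree q t)
      (\<lambda>(S,i,a). \<Prod>k\<in>set (leaves t) - insert i S. x k)"

lemma node_gen:
  fixes x :: "nat \<Rightarrow> real" and \<phi> :: "nat set \<times> nat \<times> real \<Rightarrow> real"
  assumes f1: "finite (set_pmf (pivot_subtree q l))" and f2: "finite (set_pmf (pivot_subtree q r))"
    and hM: "\<And>S1 i a S2 j b. (S1,i,a) \<in> set_pmf (pivot_subtree q l) \<Longrightarrow>
        (S2,j,b) \<in> set_pmf (pivot_subtree q r) \<Longrightarrow>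
        measure_pmf.expectation (pivot_merge (S1\<union>S2) i a j b) \<phi> =
        bil c11 c12 c21 c22 (\<Prod>k\<in>set (leaves l) - S1. x k) (\<Prod>k\<in>set (leaves l) - insert i S1. x k)
           (\<Prod>k\<in>set (leaves r) - S2. x k) (\<Prod>k\<in>set (leaves r) - insert j S2. x k)"
  shows "measure_pmf.expectation (pivot_subtree q (Node l r)) \<phi> =
     bil c11 c12 c21 c22 (KK q l x) (HH q l x) (KK q r x) (HH q r x)"
proof -
  let ?P1 = "pivot_subtree q l" and ?P2 = "pivot_subtree q r"
  define A where "A = (\<lambda>(S1::nat set,i::nat,a::real). \<Prod>k\<in>set (leaves l) - S1. x k)"
  define B where "B = (\<lambda>(S1::nat set,i::nat,a::real). \<Prod>k\<in>set (leaves l) - insert i S1. x k)"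
  define C where "C = (\<lambda>(S1::nat set,i::nat,a::real). \<Prod>k\<in>set (leaves r) - S1. x k)"
  define D where "D = (\<lambda>(S1::nat set,i::nat,a::real). \<Prod>k\<in>set (leaves r) - insert i S1. x k)"
  define F where "F = (\<lambda>(S1::nat set, i::nat, a::real). bind_pmf ?P2 (\<lambda>(S2, j, b). pivot_merge (S1 \<union> S2) i a j b))"
  have eq: "pivot_subtree q (Node l r) = bind_pmf ?P1 F" by (simp add: F_def)
  have fF: "finite (set_pmf (F y))" for y
    unfolding F_def using f2 by (auto intro!: finite_bind finite_merge split: prod.splits)
  have "measure_pmf.expectation (pivot_subtree q (Node l r)) \<phi>
      = measure_pmf.expectation ?P1 (\<lambda>y. measure_pmf.expectation (F y) \<phi>)"
    unfolding eq by (rule exp_bind[OF f1 fF])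
  also have "\<dots> = measure_pmf.expectation ?P1 (\<lambda>y. measure_pmf.expectation ?P2 (\<lambda>z.
            bil c11 c12 c21 c22 (A y) (B y) (C z) (D z)))"
  proof (rule exp_cong)
    fix y assume y: "y \<in> set_pmf ?P1"
    obtain S1 i a where yy: "y = (S1,i,a)" by (cases y) auto
    have "measure_pmf.expectation (F y) \<phi> = measure_pmf.expectation ?P2
       (\<lambda>z. measure_pmf.expectation ((\<lambda>(S2, j, b). pivot_merge (S1 \<union> S2) i a j b) z) \<phi>)"
      unfolding yy F_def by (simp, rule exp_bind[OF f2]) (auto intro!: finite_merge split: prod.splits)
    also have "\<dots> = measure_pmf.expectation ?P2 (\<lambda>z. bil c11 c12 c21 c22 (A y) (B y) (C z) (D z))"
    proof (rule exp_cong)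
      fix z assume z: "z \<in> set_pmf ?P2"
      obtain S2 j b where zz: "z = (S2,j,b)" by (cases z) auto
      show "measure_pmf.expectation ((\<lambda>(S2, j, b). pivot_merge (S1 \<union> S2) i a j b) z) \<phi>
            = bil c11 c12 c21 c22 (A y) (B y) (C z) (D z)"
        using hM[of S1 i a S2 j b] y z unfolding yy zz A_def B_def C_def D_def by simp
    qed
    finally show "measure_pmf.expectation (F y) \<phi> = measure_pmf.expectation ?P2 (\<lambda>z. bil c11 c12 c21 c22 (A y) (B y) (C z) (D z))" .
  qed
  also have "\<dots> = bil c11 c12 c21 c22 (measure_pmf.expectation ?P1 A) (measure_pmf.expectation ?P1 B)
            (measure_pmf.expectation ?P2 C) (measure_pmf.expectation ?P2 D)"
    by (rule exp_bil[OF f1 f2])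
  also have "\<dots> = bil c11 c12 c21 c22 (KK q l x) (HH q l x) (KK q r x) (HH q r x)"
    unfolding KK_def HH_def A_def B_def C_def D_def by simp
  finally show ?thesis .
qed

lemma psplit:
  assumes "finite L1" "finite L2" "L1 \<inter> L2 = {}" "A \<subseteq> L1" "B \<subseteq> L2"
  shows "(\<Prod>k\<in>(L1 \<union> L2) - (A \<union> B). x k) = (\<Prod>k\<in>L1 - A. (x k::real)) * (\<Prod>k\<in>L2 - B. x k)"
proof -
  have "(L1 \<union> L2) - (A \<union> B) = (L1 - A) \<union> (L2 - B)" using assms by auto
  moreover have "prod x ((L1 - A) \<union> (L2 - B)) = prod x (L1 - A) * prod x (L2 - B)"
    by (rule prod.union_disjoint) (use assms in auto)
  ultimately show ?thesis by simp
qed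

context
  fixes L1 L2 S1 S2 :: "nat set" and i j :: nat and a b :: real and x :: "nat \<Rightarrow> real"
  assumes fL: "finite L1" "finite L2" and dj: "L1 \<inter> L2 = {}"
    and s1: "S1 \<subseteq> L1" "i \<in> L1" and s2: "S2 \<subseteq> L2" "j \<in> L2"
    and ab: "0 \<le> a" "a \<le> 1" "0 \<le> b" "b \<le> 1"
begin

private lemma sp1: "(\<Prod>k\<in>(L1 \<union> L2) - (S1 \<union> S2). x k) = (\<Prod>k\<in>L1 - S1. x k) * (\<Prod>k\<in>L2 - S2. x k)"
  by (rule psplit) (use fL dj s1 s2 in auto)
private lemma sp2: "(\<Prod>k\<in>(L1 \<union> L2) - insert i (S1 \<union> S2). x k) = (\<Prod>k\<in>L1 - insert i S1. x k) * (\<Prod>k\<in>L2 - S2. x k)"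
  using psplit[of L1 L2 "insert i S1" S2 x] fL dj s1 s2 by auto
private lemma sp3: "(\<Prod>k\<in>(L1 \<union> L2) - insert j (S1 \<union> S2). x k) = (\<Prod>k\<in>L1 - S1. x k) * (\<Prod>k\<in>L2 - insert j S2. x k)"
  using psplit[of L1 L2 S1 "insert j S2" x] fL dj s1 s2 by auto
private lemma sp4: "(\<Prod>k\<in>(L1 \<union> L2) - insert i (insert j (S1 \<union> S2)). x k) = (\<Prod>k\<in>L1 - insert i S1. x k) * (\<Prod>k\<in>L2 - insert j S2. x k)"
  using psplit[of L1 L2 "insert i S1" "insert j S2" x] fL dj s1 s2 by (auto simp: insert_commute)
private lemma sp5: "(\<Prod>k\<in>(L1 \<union> L2) - insert j (insert i (S1 \<union> S2)). x k) = (\<Prod>k\<in>L1 - insert i S1. x k) * (\<Prod>k\<in>L2 - insert j S2. x k)"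
  using sp4 by (simp add: insert_commute)

lemma alpha_bnd: "0 \<le> a / (a + b)" "a / (a + b) \<le> 1"
  using ab by (auto simp: divide_le_eq_1)

lemma p_bnd: "\<not> a + b \<le> 1 \<Longrightarrow> 0 \<le> (1 - a) / (2 - a - b)" "\<not> a + b \<le> 1 \<Longrightarrow> (1 - a) / (2 - a - b) \<le> 1"
  using ab by (auto simp: divide_le_eq_1)

lemma mergeK_A: "a + b \<le> 1 \<Longrightarrow>
  measure_pmf.expectation (pivot_merge (S1\<union>S2) i a j b) (\<lambda>(S,i',a'). \<Prod>k\<in>(L1 \<union> L2) - S. x k)
  = bil 1 0 0 0 (\<Prod>k\<in>L1 - S1. x k) (\<Prod>k\<in>L1 - insert i S1. x k) (\<Prod>k\<in>L2 - S2. x k) (\<Prod>k\<in>L2 - insert j S2. x k)"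
  using alpha_bnd by (simp add: pivot_merge_def sp1 bil_def algebra_simps)

lemma mergeH_A: "a + b \<le> 1 \<Longrightarrow>
  measure_pmf.expectation (pivot_merge (S1\<union>S2) i a j b) (\<lambda>(S,i',a'). \<Prod>k\<in>(L1 \<union> L2) - insert i' S. x k)
  = bil 0 (1 - a/(a+b)) (a/(a+b)) 0 (\<Prod>k\<in>L1 - S1. x k) (\<Prod>k\<in>L1 - insert i S1. x k) (\<Prod>k\<in>L2 - S2. x k) (\<Prod>k\<in>L2 - insert j S2. x k)"
  using alpha_bnd by (simp add: pivot_merge_def sp2 sp3 bil_def algebra_simps)

lemma mergeK_B: "\<not> a + b \<le> 1 \<Longrightarrow>
  measure_pmf.expectation (pivot_merge (S1\<union>S2) i a j b) (\<lambda>(S,i',a'). \<Prod>k\<in>(L1 \<union> L2) - S. x k)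
  = bil 0 ((1 - a) / (2 - a - b)) (1 - (1 - a) / (2 - a - b)) 0 (\<Prod>k\<in>L1 - S1. x k) (\<Prod>k\<in>L1 - insert i S1. x k) (\<Prod>k\<in>L2 - S2. x k) (\<Prod>k\<in>L2 - insert j S2. x k)"
  using p_bnd by (simp add: pivot_merge_def sp2 sp3 bil_def algebra_simps)

lemma mergeH_B: "\<not> a + b \<le> 1 \<Longrightarrow>
  measure_pmf.expectation (pivot_merge (S1\<union>S2) i a j b) (\<lambda>(S,i',a'). \<Prod>k\<in>(L1 \<union> L2) - insert i' S. x k)
  = bil 0 0 0 1 (\<Prod>k\<in>L1 - S1. x k) (\<Prod>k\<in>L1 - insert i S1. x k) (\<Prod>k\<in>L2 - S2. x k) (\<Prod>k\<in>L2 - insert j S2. x k)"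
  using p_bnd by (simp add: pivot_merge_def sp4 sp5 bil_def algebra_simps)

end

lemma exp_return: "measure_pmf.expectation (return_pmf z) (f :: _ \<Rightarrow> real) = f z"
  by (simp add: exp_fin)

lemma local_KK: "local_on (set (leaves t)) (KK q t)"
  unfolding local_on_def KK_def
  by (auto intro!: exp_cong prod.cong split: prod.splits)

lemma local_HH: "local_on (set (leaves t)) (HH q t)"
  unfolding local_on_def HH_def
  by (auto intro!: exp_cong prod.cong split: prod.splits)

lemma KH_node:
  assumes dn: "distinct (leaves (Node l r))" and qb: "\<forall>k\<in>set (leaves (Node l r)). 0 \<le> q k \<and> q k \<le> 1"
  defines "a \<equiv> pv q l" and "b \<equiv> pv q r"
  shows "a + b \<le> 1 \<Longrightarrow> KK q (Node l r) x = bil 1 0 0 0 (KK q l x) (HH q l x) (KK q r x) (HH q r x)"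
    and "a + b \<le> 1 \<Longrightarrow> HH q (Node l r) x = bil 0 (1 - a/(a+b)) (a/(a+b)) 0 (KK q l x) (HH q l x) (KK q r x) (HH q r x)"
    and "\<not> a + b \<le> 1 \<Longrightarrow> KK q (Node l r) x = bil 0 ((1 - a) / (2 - a - b)) (1 - (1 - a) / (2 - a - b)) 0 (KK q l x) (HH q l x) (KK q r x) (HH q r x)"
    and "\<not> a + b \<le> 1 \<Longrightarrow> HH q (Node l r) x = bil 0 0 0 1 (KK q l x) (HH q l x) (KK q r x) (HH q r x)"
proof -
  define L1 where "L1 = set (leaves l)"
  define L2 where "L2 = set (leaves r)"
  have d: "distinct (leaves l)" "distinct (leaves r)" "L1 \<inter> L2 = {}"
    using dn by (auto simp: L1_def L2_def)
  have qq: "\<forall>k\<in>set (leaves l). 0 \<le> q k \<and> q k \<le> 1" "\<forall>k\<in>set (leaves r). 0 \<le> q k \<and> q k \<le> 1"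
    using qb by auto
  note IHl = supp_inv[OF d(1) qq(1), folded L1_def a_def]
  note IHr = supp_inv[OF d(2) qq(2), folded L2_def b_def]
  have fL: "finite L1" "finite L2" by (auto simp: L1_def L2_def)
  have LN: "set (leaves (Node l r)) = L1 \<union> L2" by (simp add: L1_def L2_def)
  have KKd: "KK q (Node l r) x = measure_pmf.expectation (pivot_subtree q (Node l r))
      (\<lambda>(S,i,a). \<Prod>k\<in>L1 \<union> L2 - S. x k)" unfolding KK_def LN ..
  have HHd: "HH q (Node l r) x = measure_pmf.expectation (pivot_subtree q (Node l r))
      (\<lambda>(S,i,a). \<Prod>k\<in>L1 \<union> L2 - insert i S. x k)" unfolding HH_def LN ..
  have ctx: "finite L1 \<and> finite L2 \<and> L1 \<inter> L2 = {} \<and> S1 \<subseteq> L1 \<and> i \<in> L1 \<and> S2 \<subseteq> L2 \<and> j \<in> L2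
     \<and> 0 \<le> a' \<and> a' \<le> 1 \<and> 0 \<le> b' \<and> b' \<le> 1 \<and> a' = a \<and> b' = b"
    if "(S1,i,a') \<in> set_pmf (pivot_subtree q l)" "(S2,j,b') \<in> set_pmf (pivot_subtree q r)" for S1 i a' S2 j b'
    using that IHl IHr fL d(3) by auto
  show "a + b \<le> 1 \<Longrightarrow> KK q (Node l r) x = bil 1 0 0 0 (KK q l x) (HH q l x) (KK q r x) (HH q r x)"
    unfolding KKd by (rule node_gen[OF conjunct1[OF IHl] conjunct1[OF IHr], folded L1_def L2_def])
      (use ctx mergeK_A in metis)
  show "a + b \<le> 1 \<Longrightarrow> HH q (Node l r) x = bil 0 (1 - a/(a+b)) (a/(a+b)) 0 (KK q l x) (HH q l x) (KK q r x) (HH q r x)"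
    unfolding HHd by (rule node_gen[OF conjunct1[OF IHl] conjunct1[OF IHr], folded L1_def L2_def])
      (use ctx mergeH_A in metis)
  show "\<not> a + b \<le> 1 \<Longrightarrow> KK q (Node l r) x = bil 0 ((1 - a) / (2 - a - b)) (1 - (1 - a) / (2 - a - b)) 0 (KK q l x) (HH q l x) (KK q r x) (HH q r x)"
    unfolding KKd by (rule node_gen[OF conjunct1[OF IHl] conjunct1[OF IHr], folded L1_def L2_def])
      (use ctx mergeK_B in metis)
  show "\<not> a + b \<le> 1 \<Longrightarrow> HH q (Node l r) x = bil 0 0 0 1 (KK q l x) (HH q l x) (KK q r x) (HH q r x)"
    unfolding HHd by (rule node_gen[OF conjunct1[OF IHl] conjunct1[OF IHr], folded L1_def L2_def])
      (use ctx mergeH_B in metis)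
qed

lemma KH_inv:
  "distinct (leaves t) \<Longrightarrow> \<forall>k\<in>set (leaves t). 0 \<le> q k \<and> q k \<le> 1 \<Longrightarrow> InvKH (KK q t) (HH q t)"
proof (induction t)
  case (Leaf i)
  have "KK q (Leaf i) = (\<lambda>x. x i)" "HH q (Leaf i) = (\<lambda>x. 1)"
    by (auto simp: KK_def HH_def exp_return)
  then show ?case using inv_leaf by simp
next
  case (Node l r)
  have d: "distinct (leaves l)" "distinct (leaves r)" "set (leaves l) \<inter> set (leaves r) = {}"
    using Node.prems(1) by auto
  have qq: "\<forall>k\<in>set (leaves l). 0 \<le> q k \<and> q k \<le> 1" "\<forall>k\<in>set (leaves r). 0 \<le> q k \<and> q k \<le> 1"
    using Node.prems(2) by auto
  have I1: "InvKH (KK q l) (HH q l)" by (rule Node.IH(1)[OF d(1) qq(1)])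
  have I2: "InvKH (KK q r) (HH q r)" by (rule Node.IH(2)[OF d(2) qq(2)])
  note bl = supp_inv[OF d(1) qq(1)] and br = supp_inv[OF d(2) qq(2)]
  show ?case
  proof (cases "pv q l + pv q r \<le> 1")
    case True
    have e: "KK q (Node l r) = (\<lambda>x. bil 1 0 0 0 (KK q l x) (HH q l x) (KK q r x) (HH q r x))"
            "HH q (Node l r) = (\<lambda>x. bil 0 (1 - pv q l/(pv q l+pv q r)) (pv q l/(pv q l+pv q r)) 0 (KK q l x) (HH q l x) (KK q r x) (HH q r x))"
      using KH_node(1,2)[OF Node.prems True] by auto
    show ?thesis unfolding e
      by (rule inv_caseA[OF local_KK local_HH local_KK local_HH d(3) I1 I2])
         (use bl br in \<open>auto simp: divide_le_eq_1\<close>)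
  next
    case False
    have e: "KK q (Node l r) = (\<lambda>x. bil 0 ((1 - pv q l) / (2 - pv q l - pv q r)) (1 - (1 - pv q l) / (2 - pv q l - pv q r)) 0 (KK q l x) (HH q l x) (KK q r x) (HH q r x))"
            "HH q (Node l r) = (\<lambda>x. bil 0 0 0 1 (KK q l x) (HH q l x) (KK q r x) (HH q r x))"
      using KH_node(3,4)[OF Node.prems False] by auto
    show ?thesis unfolding e
      by (rule inv_caseB[OF local_KK local_HH local_KK local_HH d(3) I1 I2])
         (use bl br False in \<open>auto simp: divide_le_eq_1\<close>)
  qed
qed

lemma prob_all_sum:
  assumes "finite (set_pmf \<mu>)"
  shows "prob_all \<mu> B = (\<Sum>X\<in>set_pmf \<mu>. if B \<subseteq> X then pmf \<mu> X else 0)"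
proof -
  have "prob_all \<mu> B = measure_pmf.expectation \<mu> (indicator {X. B \<subseteq> X})"
    unfolding prob_all_def by simp
  also have "\<dots> = (\<Sum>X\<in>set_pmf \<mu>. indicator {X. B \<subseteq> X} X * pmf \<mu> X)"
    by (rule exp_fin[OF assms])
  also have "\<dots> = (\<Sum>X\<in>set_pmf \<mu>. if B \<subseteq> X then pmf \<mu> X else 0)"
    by (intro sum.cong) (auto simp: indicator_def)
  finally show ?thesis .
qed

lemma prob_all_mono: "A \<subseteq> B \<Longrightarrow> prob_all \<mu> B \<le> prob_all \<mu> A"
  unfolding prob_all_def by (intro measure_pmf.finite_measure_mono) auto

lemma count_lemma:
  assumes fN: "finite N" and fs: "finite (set_pmf \<mu>)"
    and sup: "\<And>X. X \<in> set_pmf \<mu> \<Longrightarrow> X \<subseteq> N \<and> card X = k"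
    and A: "A \<subseteq> N"
  shows "(\<Sum>j\<in>N - A. prob_all \<mu> (insert j A)) = (real k - real (card A)) * prob_all \<mu> A"
proof -
  have "(\<Sum>j\<in>N - A. prob_all \<mu> (insert j A))
      = (\<Sum>j\<in>N - A. \<Sum>X\<in>set_pmf \<mu>. if insert j A \<subseteq> X then pmf \<mu> X else 0)"
    by (simp add: prob_all_sum[OF fs])
  also have "\<dots> = (\<Sum>X\<in>set_pmf \<mu>. \<Sum>j\<in>N - A. if insert j A \<subseteq> X then pmf \<mu> X else 0)"
    by (rule sum.swap)
  also have "\<dots> = (\<Sum>X\<in>set_pmf \<mu>. (real k - real (card A)) * (if A \<subseteq> X then pmf \<mu> X else 0))"
  proof (rule sum.cong[OF refl])
    fix X assume X: "X \<in> set_pmf \<mu>"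
    from sup[OF X] have XN: "X \<subseteq> N" and cX: "card X = k" by auto
    show "(\<Sum>j\<in>N - A. if insert j A \<subseteq> X then pmf \<mu> X else 0)
        = (real k - real (card A)) * (if A \<subseteq> X then pmf \<mu> X else 0)"
    proof (cases "A \<subseteq> X")
      case True
      have "(\<Sum>j\<in>N - A. if insert j A \<subseteq> X then pmf \<mu> X else 0) = (\<Sum>j\<in>N - A. if j \<in> X then pmf \<mu> X else 0)"
        using True by (intro sum.cong) auto
      also have "\<dots> = (\<Sum>j\<in>{j\<in>N - A. j \<in> X}. pmf \<mu> X)"
        by (rule sum.inter_filter[symmetric]) (use fN in auto)
      also have "{j\<in>N - A. j \<in> X} = X - A" using XN by auto
      also have "card (X - A) = card X - card A"
        using True fN XN by (intro card_Diff_subset) (auto intro: finite_subset)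
      moreover have "card A \<le> card X" using True fN XN by (intro card_mono) (auto intro: finite_subset)
      ultimately show ?thesis using True cX by (simp add: of_nat_diff)
    next
      case False
      then show ?thesis by (auto intro!: sum.neutral)
    qed
  qed
  also have "\<dots> = (real k - real (card A)) * prob_all \<mu> A"
    by (simp add: prob_all_sum[OF fs] sum_distrib_left)
  finally show ?thesis .
qed

lemma infl_sum:
  assumes fN: "finite N" and fs: "finite (set_pmf \<mu>)"
    and sup: "\<And>X. X \<in> set_pmf \<mu> \<Longrightarrow> X \<subseteq> N \<and> card X = k"
    and nc: "\<And>A i j. A \<subseteq> N \<Longrightarrow> i \<in> N - A \<Longrightarrow> j \<in> N - A \<Longrightarrow> i \<noteq> j \<Longrightarrow>
        prob_all \<mu> (insert i (insert j A)) * prob_all \<mu> A \<le> prob_all \<mu> (insert i A) * prob_all \<mu> (insert j A)"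
    and S: "S \<subseteq> N" and PS: "prob_all \<mu> S > 0" and i: "i \<in> N - S" and PSi: "prob_all \<mu> (insert i S) > 0"
  shows "(\<Sum>j\<in>N. \<bar>influence \<mu> S i j\<bar>) = 2 - 2 * cond_prob \<mu> i S"
proof -
  define P where "P = prob_all \<mu>"
  define c where "c = P (insert i S) / P S"
  have cp: "cond_prob \<mu> i S = c" unfolding c_def P_def cond_prob_def ..
  have c1: "c \<le> 1" using prob_all_mono[of S "insert i S" \<mu>] PS unfolding c_def P_def by auto
  define D where "D = (\<lambda>j. P (insert j S) / P S - P (insert j (insert i S)) / P (insert i S))"
  have split: "(\<Sum>j\<in>N. \<bar>influence \<mu> S i j\<bar>) = (\<Sum>j\<in>N - S. \<bar>influence \<mu> S i j\<bar>) + (\<Sum>j\<in>S. \<bar>influence \<mu> S i j\<bar>)"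
    using S fN by (rule sum.subset_diff)
  have z: "(\<Sum>j\<in>S. \<bar>influence \<mu> S i j\<bar>) = 0" by (simp add: influence_def)
  have each: "\<bar>influence \<mu> S i j\<bar> = D j + (if j = i then 2 * (1 - c) else 0)" if j: "j \<in> N - S" for j
  proof (cases "j = i")
    case True
    have "influence \<mu> S i j = 1 - c"
      using True j PSi unfolding influence_def cond_prob_def c_def P_def by simp
    moreover have "D j = c - 1"
      using True PSi unfolding D_def c_def P_def by simp
    ultimately show ?thesis using True c1 by simp
  next
    case False
    have ins: "insert j (insert i S) = insert i (insert j S)" by auto
    have le: "P (insert i (insert j S)) * P S \<le> P (insert i S) * P (insert j S)"
      unfolding P_def using nc[OF S i j] False by auto
    have "P (insert j (insert i S)) / P (insert i S) \<le> P (insert j S) / P S"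
      using le PS PSi unfolding ins P_def by (simp add: divide_simps mult.commute)
    moreover have "influence \<mu> S i j = P (insert j (insert i S)) / P (insert i S) - P (insert j S) / P S"
      using j unfolding influence_def cond_prob_def P_def by simp
    ultimately show ?thesis using False unfolding D_def by simp
  qed
  have "(\<Sum>j\<in>N - S. \<bar>influence \<mu> S i j\<bar>) = (\<Sum>j\<in>N - S. D j) + (\<Sum>j\<in>N - S. if j = i then 2 * (1 - c) else 0)"
    by (simp add: each sum.distrib)
  also have "(\<Sum>j\<in>N - S. if j = i then 2 * (1 - c) else 0) = 2 * (1 - c)"
    using i fN by (simp add: sum.delta)
  also have "(\<Sum>j\<in>N - S. D j) = 0"
  proof -
    have fS: "finite S" using S fN finite_subset by auto
    have s1: "(\<Sum>j\<in>N - S. P (insert j S)) = (real k - real (card S)) * P S"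
      unfolding P_def by (rule count_lemma[OF fN fs sup S])
    have s2: "(\<Sum>j\<in>N - insert i S. P (insert j (insert i S))) = (real k - real (card (insert i S))) * P (insert i S)"
      unfolding P_def by (rule count_lemma[OF fN fs sup]) (use S i in auto)
    have NS: "N - S = insert i (N - insert i S)" using i by auto
    have s3: "(\<Sum>j\<in>N - S. P (insert j (insert i S))) = (real k - real (card S)) * P (insert i S)"
      unfolding NS using s2 i fS fN by (simp add: algebra_simps)
    have "(\<Sum>j\<in>N - S. D j) = (\<Sum>j\<in>N - S. P (insert j S)) / P S - (\<Sum>j\<in>N - S. P (insert j (insert i S))) / P (insert i S)"
      unfolding D_def by (simp add: sum_subtractf sum_divide_distrib)
    also have "\<dots> = 0" unfolding s1 s3 using PS PSi unfolding P_def by simp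
    finally show ?thesis .
  qed
  finally show ?thesis using split z cp by simp
qed

lemma root_facts:
  assumes d: "distinct (leaves T)" and N: "set (leaves T) = N"
    and qb: "\<forall>k\<in>N. 0 \<le> q k \<and> q k \<le> 1" and sk: "(\<Sum>k\<in>N. q k) = real k"
  shows "finite (set_pmf (pivot_subtree q T))"
    and "\<And>S i a. (S,i,a) \<in> set_pmf (pivot_subtree q T) \<Longrightarrow> S \<subseteq> N \<and> i \<in> N \<and> i \<notin> S \<and> a = pv q T \<and> real (card S) + a = real k"
    and "pv q T = 0 \<or> pv q T = 1"
proof -
  note si = supp_inv[OF d qb[folded N]]
  show "finite (set_pmf (pivot_subtree q T))" using si by blast
  show el: "\<And>S i a. (S,i,a) \<in> set_pmf (pivot_subtree q T) \<Longrightarrow> S \<subseteq> N \<and> i \<in> N \<and> i \<notin> S \<and> a = pv q T \<and> real (card S) + a = real k"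
    using si N sk by auto
  obtain y where y: "y \<in> set_pmf (pivot_subtree q T)" using set_pmf_not_empty by fast
  obtain S i a where yy: "y = (S,i,a)" by (cases y) auto
  have e: "real (card S) + pv q T = real k" and b: "0 \<le> pv q T" "pv q T \<le> 1"
    using el[of S i a] y yy si by auto
  have "card S \<le> k" using e b by linarith
  then have "pv q T = real (k - card S)" using e by (simp add: of_nat_diff)
  moreover have "k - card S \<le> 1" using e b by linarith
  ultimately show "pv q T = 0 \<or> pv q T = 1"
    by (cases "k - card S") auto
qed

lemma mu_facts:
  assumes d: "distinct (leaves T)" and N: "set (leaves T) = N"
    and qb: "\<forall>k\<in>N. 0 \<le> q k \<and> q k \<le> 1" and sk: "(\<Sum>k\<in>N. q k) = real k"
  shows "finite (set_pmf (pivotal_sampling q T))"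
    and "\<And>X. X \<in> set_pmf (pivotal_sampling q T) \<Longrightarrow> X \<subseteq> N \<and> card X = k"
    and "RayC (\<lambda>x. measure_pmf.expectation (pivotal_sampling q T) (\<lambda>X. \<Prod>k\<in>N - X. x k))"
proof -
  note rf = root_facts[OF assms]
  show "finite (set_pmf (pivotal_sampling q T))"
    unfolding pivotal_sampling_def using rf(1) by simp
  show "X \<subseteq> N \<and> card X = k" if X: "X \<in> set_pmf (pivotal_sampling q T)" for X
  proof -
    obtain S i a where m: "(S,i,a) \<in> set_pmf (pivot_subtree q T)"
      and XX: "X = (if a = 1 then insert i S else S)"
      using X unfolding pivotal_sampling_def by auto
    have h: "S \<subseteq> N" "i \<in> N" "i \<notin> S" "a = pv q T" "real (card S) + a = real k"
      using rf(2)[OF m] by auto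
    have fS: "finite S" using h(1) N finite_subset by blast
    show ?thesis
    proof (cases "a = 1")
      case True
      then have "real (card S) + 1 = real k" using h by simp
      then have "card S + 1 = k" by linarith
      then show ?thesis using True XX h fS by simp
    next
      case False
      then have "a = 0" using h(4) rf(3) by auto
      then show ?thesis using False XX h by simp
    qed
  qed
  have geq: "measure_pmf.expectation (pivotal_sampling q T) (\<lambda>X. \<Prod>k\<in>N - X. x k)
      = (if pv q T = 1 then HH q T x else KK q T x)" for x
  proof -
    have "measure_pmf.expectation (pivotal_sampling q T) (\<lambda>X. \<Prod>k\<in>N - X. x k)
      = measure_pmf.expectation (pivot_subtree q T)
          (\<lambda>(S,i,a). if pv q T = 1 then \<Prod>k\<in>N - insert i S. x k else \<Prod>k\<in>N - S. x k)"
      unfolding pivotal_sampling_def integral_map_pmf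
      by (rule exp_cong) (use rf(2) in \<open>auto split: prod.splits\<close>)
    also have "\<dots> = (if pv q T = 1 then HH q T x else KK q T x)"
      unfolding HH_def KK_def N by (simp add: case_prod_unfold)
    finally show ?thesis .
  qed
  have I: "InvKH (KK q T) (HH q T)" by (rule KH_inv[OF d]) (use qb N in auto)
  show "RayC (\<lambda>x. measure_pmf.expectation (pivotal_sampling q T) (\<lambda>X. \<Prod>k\<in>N - X. x k))"
  proof (cases "pv q T = 1")
    case True
    have "(\<lambda>x. measure_pmf.expectation (pivotal_sampling q T) (\<lambda>X. \<Prod>k\<in>N - X. x k))
        = (\<lambda>x. 0 * KK q T x + 1 * HH q T x)" using True geq by simp
    then show ?thesis using I unfolding InvKH_def by metis
  next
    case False
    have "(\<lambda>x. measure_pmf.expectation (pivotal_sampling q T) (\<lambda>X. \<Prod>k\<in>N - X. x k))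
        = (\<lambda>x. 1 * KK q T x + 0 * HH q T x)" using False geq by simp
    then show ?thesis using I unfolding InvKH_def by metis
  qed
qed

lemma prob_all_g:
  assumes "finite N" "A \<subseteq> N"
  shows "prob_all \<mu> A = measure_pmf.expectation \<mu> (\<lambda>X. \<Prod>k\<in>N - X. (if k \<in> A then 0 else 1 :: real))"
proof -
  have "(\<lambda>X. \<Prod>k\<in>N - X. (if k \<in> A then 0 else 1 :: real)) = indicator {X. A \<subseteq> X}"
  proof
    fix X
    show "(\<Prod>k\<in>N - X. (if k \<in> A then 0 else 1 :: real)) = indicator {X. A \<subseteq> X} X"
    proof (cases "A \<subseteq> X")
      case True
      then have "(\<Prod>k\<in>N - X. (if k \<in> A then 0 else 1 :: real)) = (\<Prod>k\<in>N - X. 1)"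
        by (intro prod.cong) auto
      then show ?thesis using True by simp
    next
      case False
      then obtain k where "k \<in> A" "k \<notin> X" by auto
      then have "k \<in> N - X" using assms by auto
      then have "(\<Prod>k\<in>N - X. (if k \<in> A then 0 else 1 :: real)) = 0"
        using \<open>k \<in> A\<close> assms(1) by (intro prod_zero) auto
      then show ?thesis using False by simp
    qed
  qed
  then show ?thesis unfolding prob_all_def by simp
qed

lemma nc_from_ray:
  fixes \<mu> :: "nat set pmf"
  assumes fN: "finite N" and R: "RayC (\<lambda>x. measure_pmf.expectation \<mu> (\<lambda>X. \<Prod>k\<in>N - X. x k))"
    and A: "A \<subseteq> N" and i: "i \<in> N - A" and j: "j \<in> N - A" and ij: "i \<noteq> j"
  shows "prob_all \<mu> (insert i (insert j A)) * prob_all \<mu> A \<le> prob_all \<mu> (insert i A) * prob_all \<mu> (insert j A)"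
proof -
  define g where "g = (\<lambda>x::nat\<Rightarrow>real. measure_pmf.expectation \<mu> (\<lambda>X. \<Prod>k\<in>N - X. x k))"
  define ind where "ind = (\<lambda>(B::nat set) (k::nat). if k \<in> B then 0 else (1::real))"
  have pg: "B \<subseteq> N \<Longrightarrow> prob_all \<mu> B = g (ind B)" for B
    unfolding g_def ind_def by (rule prob_all_g[OF fN])
  let ?x = "ind A"
  have e1: "?x(i:=0,j:=0) = ind (insert i (insert j A))" unfolding ind_def by auto
  have e2: "?x(i:=1,j:=1) = ind A" using i j unfolding ind_def by auto
  have e3: "?x(i:=1,j:=0) = ind (insert j A)" using i ij unfolding ind_def by auto
  have e4: "?x(i:=0,j:=1) = ind (insert i A)" using j ij unfolding ind_def by auto
  have "g (?x(i:=0,j:=0)) * g (?x(i:=1,j:=1)) \<le> g (?x(i:=1,j:=0)) * g (?x(i:=0,j:=1))"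
    using R ij unfolding RayC_def g_def by blast
  then show ?thesis unfolding e1 e2 e3 e4 using A i j by (simp add: pg mult.commute)
qed

theorem mainTheorem5:
  fixes T :: btree and n k :: nat and q :: "nat \<Rightarrow> real"
  assumes "distinct (leaves T)" and "set (leaves T) = {1..n}"
    and "\<And>i. i \<in> {1..n} \<Longrightarrow> 0 \<le> q i \<and> q i \<le> 1"
    and "(\<Sum>i\<in>{1..n}. q i) = real k"
  defines "\<mu> \<equiv> pivotal_sampling q T"
  shows "homogeneous k \<mu>
    \<and> (\<forall>S \<subseteq> {1..n}. prob_all \<mu> S > 0 \<longrightarrow>
         (\<forall>i \<in> {1..n} - S. prob_all \<mu> (insert i S) > 0 \<longrightarrow>
            (\<Sum>j\<in>{1..n}. \<bar>influence \<mu> S i j\<bar>) = 2 - 2 * cond_prob \<mu> i S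
            \<and> 2 - 2 * cond_prob \<mu> i S \<le> 2))
    \<and> one_sided_linf_indep \<mu> {1..n} 2"
proof -
  let ?N = "{1..n}"
  have qb: "\<forall>k\<in>?N. 0 \<le> q k \<and> q k \<le> 1" using assms(3) by blast
  note mf = mu_facts[OF assms(1,2) qb assms(4), folded \<mu>_def]
  have fN: "finite ?N" by simp
  have nc: "\<And>A i j. A \<subseteq> ?N \<Longrightarrow> i \<in> ?N - A \<Longrightarrow> j \<in> ?N - A \<Longrightarrow> i \<noteq> j \<Longrightarrow>
        prob_all \<mu> (insert i (insert j A)) * prob_all \<mu> A \<le> prob_all \<mu> (insert i A) * prob_all \<mu> (insert j A)"
    by (rule nc_from_ray[OF fN mf(3)])
  have hom: "homogeneous k \<mu>" unfolding homogeneous_def using mf(2) by blast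
  have cnn: "0 \<le> cond_prob \<mu> i S" for i S
    unfolding cond_prob_def prob_all_def by simp
  have P2: "(\<Sum>j\<in>?N. \<bar>influence \<mu> S i j\<bar>) = 2 - 2 * cond_prob \<mu> i S \<and> 2 - 2 * cond_prob \<mu> i S \<le> 2"
    if "S \<subseteq> ?N" "prob_all \<mu> S > 0" "i \<in> ?N - S" "prob_all \<mu> (insert i S) > 0" for S i
    using infl_sum[OF fN mf(1) mf(2) nc that] cnn[of i S] by simp
  have P3: "one_sided_linf_indep \<mu> ?N 2"
    unfolding one_sided_linf_indep_def
  proof (intro allI impI ballI)
    fix S i assume S: "S \<subseteq> ?N" and PS: "prob_all \<mu> S > 0" and i: "i \<in> ?N" and PSi: "prob_all \<mu> (insert i S) > 0"
    show "(\<Sum>j\<in>?N. \<bar>influence \<mu> S i j\<bar>) \<le> 2"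
    proof (cases "i \<in> S")
      case True
      then have "influence \<mu> S i j = 0" for j
        by (simp add: influence_def insert_absorb)
      then show ?thesis by simp
    next
      case False
      then show ?thesis using P2[OF S PS _ PSi] i by auto
    qed
  qed
  show ?thesis using hom P2 P3 by blast
qed

end
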